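(* Let $g:\mathbb C\times\mathbb R\to\mathbb R$ be smooth and let $f=(g,\mathrm{pr}_{\mathbb R}):\mathbb C\times\mathbb R\to\mathbb R^2$. Then the map $f\circ \mathrm{Hopf}:\mathbb C^2\to\mathbb R^2$ is an $S$-invariant nodal Lagrangian fibration with a single focus-focus singularity at the origin if and only if $f$ is a submersion.
   Context: $\mathbb C^2$ carries its standard Kähler structure with coordinates $z_1,z_2$. $\mu(z_1,z_2)=\pi(|z_1|^2-|z_2|^2)$ generates the action of $S=\mathbb R/\mathbb Z$ given by $\theta\cdot(z_1,z_2)=(e^{2\pi i\theta}z_1,e^{-2\pi i\theta}z_2)$, and $\mathrm{Hopf}:\mathbb C^2\to\mathbb C\times\mathbb R$, $(z_1,z_2)\mapsto(2\pi z_1z_2,\mu(z_1,z_2))$. A nodal Lagrangian submersion (fibration) $p:X^4\to B^2$ is a smooth map whose kernel at each regular point is a Lagrangian subspace and all of whose critical points are of focus-focus type: for $F=(f_1,f_2)$ with $\{f_1,f_2\}=0$, a critical point $m$ ($dF(m)=0$) is of focus-focus type if the Hessians of $f_1,f_2$ at $m$ are linearly independent and, in some symplectic basis $e_1,f_1,e_2,f_2$ of $T_mX$, are linear combinations of the quadratic forms $e^1\wedge f^1+e^2\wedge f^2$ and $e^1\wedge f^2-e^2\wedge f^1$. *)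

theory Defs
  imports "HOL-Analysis.Analysis"
begin

text \<open>Smooth (C-infinity) maps: there is a family of iterated Frechet derivatives
  D vs x (vs = list of directions), each of which is Frechet differentiable
  with derivative given by the next one.\<close>
definition smooth :: "('a::real_normed_vector \<Rightarrow> 'b::real_normed_vector) \<Rightarrow> bool" where
  "smooth f \<longleftrightarrow> (\<exists>D :: 'a list \<Rightarrow> 'a \<Rightarrow> 'b. D [] = f \<and>
      (\<forall>vs x. (D vs has_derivative (\<lambda>h. D (h # vs) x)) (at x)))"

definition submersion :: "('a::real_normed_vector \<Rightarrow> 'b::real_normed_vector) \<Rightarrow> bool" where
  "submersion f \<longleftrightarrow> (\<forall>p. f differentiable (at p) \<and> surj (frechet_derivative f (at p)))"

text \<open>Standard Kaehler (symplectic) form on C^2: sum of dx_k /\ dy_k.\<close>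
definition omega :: "complex \<times> complex \<Rightarrow> complex \<times> complex \<Rightarrow> real" where
  "omega u v = Im (cnj (fst u) * fst v) + Im (cnj (snd u) * snd v)"

definition mu :: "complex \<times> complex \<Rightarrow> real" where
  "mu z = pi * ((cmod (fst z))\<^sup>2 - (cmod (snd z))\<^sup>2)"

definition Hopf :: "complex \<times> complex \<Rightarrow> complex \<times> real" where
  "Hopf z = (2 * complex_of_real pi * fst z * snd z, mu z)"

text \<open>The circle action of S = R/Z (parametrised by theta in R).\<close>
definition S_act :: "real \<Rightarrow> complex \<times> complex \<Rightarrow> complex \<times> complex" where
  "S_act \<theta> z = (exp (2 * pi * \<i> * complex_of_real \<theta>) * fst z,
                 exp (- 2 * pi * \<i> * complex_of_real \<theta>) * snd z)"

definition S_invariant :: "(complex \<times> complex \<Rightarrow> 'b) \<Rightarrow> bool" where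
  "S_invariant F \<longleftrightarrow> (\<forall>\<theta> z. F (S_act \<theta> z) = F z)"

definition lagrangian_subspace :: "(complex \<times> complex) set \<Rightarrow> bool" where
  "lagrangian_subspace V \<longleftrightarrow> subspace V \<and> dim V = 2 \<and> (\<forall>u\<in>V. \<forall>v\<in>V. omega u v = 0)"

definition regular_point :: "(complex \<times> complex \<Rightarrow> real \<times> real) \<Rightarrow> complex \<times> complex \<Rightarrow> bool" where
  "regular_point F m \<longleftrightarrow> surj (frechet_derivative F (at m))"

definition hessian :: "('a::real_normed_vector \<Rightarrow> real) \<Rightarrow> 'a \<Rightarrow> 'a \<Rightarrow> 'a \<Rightarrow> real" where
  "hessian h m u v = frechet_derivative (\<lambda>x. frechet_derivative h (at x) u) (at m) v"

definition symplectic_basis :: "complex \<times> complex \<Rightarrow> complex \<times> complex \<Rightarrow> complex \<times> complex \<Rightarrow> complex \<times> complex \<Rightarrow> bool" where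
  "symplectic_basis e1 f1 e2 f2 \<longleftrightarrow> span {e1, f1, e2, f2} = UNIV \<and>
     omega e1 f1 = 1 \<and> omega e2 f2 = 1 \<and> omega e1 f2 = 0 \<and> omega e2 f1 = 0 \<and>
     omega e1 e2 = 0 \<and> omega f1 f2 = 0"

definition focus_focus :: "(complex \<times> complex \<Rightarrow> real \<times> real) \<Rightarrow> complex \<times> complex \<Rightarrow> bool" where
  "focus_focus F m \<longleftrightarrow>
     (let H1 = hessian (fst \<circ> F) m; H2 = hessian (snd \<circ> F) m in
       frechet_derivative F (at m) = (\<lambda>_. 0) \<and>
       (\<forall>a b. (\<forall>v. a * H1 v v + b * H2 v v = 0) \<longrightarrow> a = 0 \<and> b = 0) \<and>
       (\<exists>e1 f1 e2 f2. symplectic_basis e1 f1 e2 f2 \<and>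
          (\<exists>c1 d1 c2 d2. \<forall>a1 b1 a2 b2.
             let v = a1 *\<^sub>R e1 + b1 *\<^sub>R f1 + a2 *\<^sub>R e2 + b2 *\<^sub>R f2 in
               H1 v v = c1 * (a1 * b1 + a2 * b2) + d1 * (a1 * b2 - a2 * b1) \<and>
               H2 v v = c2 * (a1 * b1 + a2 * b2) + d2 * (a1 * b2 - a2 * b1))))"

definition nodal_lagrangian_fibration :: "(complex \<times> complex \<Rightarrow> real \<times> real) \<Rightarrow> bool" where
  "nodal_lagrangian_fibration F \<longleftrightarrow> smooth F \<and>
     (\<forall>m. regular_point F m \<longrightarrow> lagrangian_subspace {v. frechet_derivative F (at m) v = 0}) \<and>
     (\<forall>m. \<not> regular_point F m \<longrightarrow> focus_focus F m)"

end

theory Submission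
  imports Defs
begin


definition dmu :: "complex \<times> complex \<Rightarrow> complex \<times> complex \<Rightarrow> real" where
  "dmu x u = 2 * pi * (Re (cnj (fst x) * fst u) - Re (cnj (snd x) * snd u))"

definition dHopf :: "complex \<times> complex \<Rightarrow> complex \<times> complex \<Rightarrow> complex \<times> real" where
  "dHopf x u = (2 * complex_of_real pi * (fst u * snd x + fst x * snd u), dmu x u)"

lemma mu_alt: "mu x = pi * (Re (cnj (fst x) * fst x) - Re (cnj (snd x) * snd x))"
  unfolding mu_def cmod_power2 by (simp add: power2_eq_square)

lemma cnj_hd: "((\<lambda>x::complex\<times>complex. cnj (f x)) has_derivative (\<lambda>u. cnj (f' u))) F"
  if "(f has_derivative f') F"
  using bounded_linear.has_derivative[OF bounded_linear_cnj that] by simp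

lemma Re_hd: "((\<lambda>x::complex\<times>complex. Re (f x)) has_derivative (\<lambda>u. Re (f' u))) F"
  if "(f has_derivative f') F"
  using bounded_linear.has_derivative[OF bounded_linear_Re that] by simp

lemma mu_deriv: "(mu has_derivative dmu x) (at x)"
proof -
  have "((\<lambda>x. pi * (Re (cnj (fst x) * fst x) - Re (cnj (snd x) * snd x))) has_derivative
     (\<lambda>u. pi * (Re (cnj (fst u) * fst x + cnj (fst x) * fst u) - Re (cnj (snd u) * snd x + cnj (snd x) * snd u)))) (at x)"
    by (rule derivative_eq_intros Re_hd cnj_hd refl has_derivative_fst has_derivative_snd has_derivative_ident | simp add: algebra_simps)+
  moreover have "(\<lambda>u. pi * (Re (cnj (fst u) * fst x + cnj (fst x) * fst u) - Re (cnj (snd u) * snd x + cnj (snd x) * snd u))) = dmu x"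
    by (auto simp: dmu_def fun_eq_iff algebra_simps)
  ultimately show ?thesis by (simp add: mu_alt[abs_def])
qed

lemma Hopf_deriv: "(Hopf has_derivative dHopf x) (at x)"
proof -
  have "((\<lambda>x. 2 * complex_of_real pi * fst x * snd x) has_derivative
     (\<lambda>u. 2 * complex_of_real pi * (fst u * snd x + fst x * snd u))) (at x)"
    by (rule derivative_eq_intros refl has_derivative_fst has_derivative_snd has_derivative_ident | simp add: algebra_simps)+
  then show ?thesis unfolding Hopf_def[abs_def] dHopf_def
    by (intro has_derivative_Pair mu_deriv) 
qed



fun fd :: "('a::real_normed_vector \<Rightarrow> 'b::real_normed_vector) \<Rightarrow> 'a list \<Rightarrow> 'a \<Rightarrow> 'b" where
  "fd f [] = f"
| "fd f (h # vs) = (\<lambda>x. frechet_derivative (fd f vs) (at x) h)"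

lemma smooth_coinduct:
  assumes "f \<in> A" "\<And>\<phi> x. \<phi> \<in> A \<Longrightarrow> \<phi> differentiable (at x)"
    "\<And>\<phi> k. \<phi> \<in> A \<Longrightarrow> (\<lambda>x. frechet_derivative \<phi> (at x) k) \<in> A"
  shows "smooth f"
proof -
  have mem: "fd f vs \<in> A" for vs
  proof (induction vs)
    case Nil then show ?case using assms(1) by simp
  next
    case (Cons h vs) then show ?case using assms(3)[of "fd f vs" h] by simp
  qed
  show ?thesis unfolding smooth_def
  proof (intro exI[of _ "fd f"] conjI allI)
    fix vs x
    have "fd f vs differentiable (at x)" using assms(2) mem by blast
    then have "(fd f vs has_derivative frechet_derivative (fd f vs) (at x)) (at x)"
      using frechet_derivative_works by blast
    moreover have "frechet_derivative (fd f vs) (at x) = (\<lambda>h. fd f (h # vs) x)" by (simp only: fd.simps)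
    ultimately show "(fd f vs has_derivative (\<lambda>h. fd f (h # vs) x)) (at x)" by (simp only:)
  next
    show "fd f [] = f" by (simp only: fd.simps)
  qed
qed
inductive_set poly :: "(complex \<times> complex \<Rightarrow> real) set" where
  pconst: "(\<lambda>x. c) \<in> poly"
| plin: "bounded_linear l \<Longrightarrow> l \<in> poly"
| padd: "p \<in> poly \<Longrightarrow> q \<in> poly \<Longrightarrow> (\<lambda>x. p x + q x) \<in> poly"
| pmul: "p \<in> poly \<Longrightarrow> q \<in> poly \<Longrightarrow> (\<lambda>x. p x * q x) \<in> poly"

lemma poly_deriv:
  assumes "p \<in> poly"
  shows "\<exists>p'. (\<forall>x. (p has_derivative (\<lambda>k. p' k x)) (at x)) \<and> (\<forall>k. p' k \<in> poly)"
  using assms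
proof induction
  case (pconst c)
  have "((\<lambda>x. c) has_derivative (\<lambda>k. 0)) (at x)" for x :: "complex \<times> complex" by (rule has_derivative_const)
  moreover have "(\<lambda>x. 0) \<in> poly" by (rule poly.pconst)
  ultimately show ?case by (intro exI[of _ "\<lambda>k x. 0"]) simp
next
  case (plin l)
  have "(l has_derivative (\<lambda>k. l k)) (at x)" for x using bounded_linear.has_derivative[OF plin has_derivative_ident] by simp
  moreover have "(\<lambda>x. l k) \<in> poly" for k by (rule poly.pconst)
  ultimately show ?case by (intro exI[of _ "\<lambda>k x. l k"]) simp
next
  case (padd p q)
  then obtain p' q' where a: "\<forall>x. (p has_derivative (\<lambda>k. p' k x)) (at x)" "\<forall>k. p' k \<in> poly"
    "\<forall>x. (q has_derivative (\<lambda>k. q' k x)) (at x)" "\<forall>k. q' k \<in> poly" by blast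
  have "((\<lambda>x. p x + q x) has_derivative (\<lambda>k. p' k x + q' k x)) (at x)" for x
    using has_derivative_add[OF a(1)[rule_format] a(3)[rule_format]] .
  moreover have "(\<lambda>x. p' k x + q' k x) \<in> poly" for k using poly.padd a(2,4) by blast
  ultimately show ?case by (intro exI[of _ "\<lambda>k x. p' k x + q' k x"]) simp
next
  case (pmul p q)
  then obtain p' q' where a: "\<forall>x. (p has_derivative (\<lambda>k. p' k x)) (at x)" "\<forall>k. p' k \<in> poly"
    "\<forall>x. (q has_derivative (\<lambda>k. q' k x)) (at x)" "\<forall>k. q' k \<in> poly" by blast
  have "((\<lambda>x. p x * q x) has_derivative (\<lambda>k. p x * q' k x + p' k x * q x)) (at x)" for x
    using has_derivative_mult[OF a(1)[rule_format] a(3)[rule_format]] .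
  moreover have "(\<lambda>x. p x * q' k x + p' k x * q x) \<in> poly" for k
    using poly.padd[OF poly.pmul[OF pmul.hyps(1) a(4)[rule_format]] poly.pmul[OF a(2)[rule_format] pmul.hyps(2)]] .
  ultimately show ?case by (intro exI[of _ "\<lambda>k x. p x * q' k x + p' k x * q x"]) simp
qed

inductive_set TT :: "((complex \<times> real) list \<Rightarrow> complex \<times> real \<Rightarrow> real) \<Rightarrow> (complex \<times> complex \<Rightarrow> real) set"
  for D where
  tbase: "p \<in> poly \<Longrightarrow> (\<lambda>x. p x * D vs (Hopf x)) \<in> TT D"
| tadd: "f \<in> TT D \<Longrightarrow> f' \<in> TT D \<Longrightarrow> (\<lambda>x. f x + f' x) \<in> TT D"

lemma TT_zero: "(\<lambda>x. 0) \<in> TT D"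
  using tbase[OF pconst[of 0], of D "[]"] by simp

lemma TT_sum: "finite S \<Longrightarrow> (\<And>i. i \<in> S \<Longrightarrow> f i \<in> TT D) \<Longrightarrow> (\<lambda>x. \<Sum>i\<in>S. f i x) \<in> TT D"
proof (induction S rule: finite_induct)
  case empty
  then show ?case using TT_zero by simp
next
  case (insert a S)
  then show ?case using tadd[of "f a" D "\<lambda>x. \<Sum>i\<in>S. f i x"] by simp
qed

lemma linear_expand:
  fixes L :: "'a::euclidean_space \<Rightarrow> real"
  assumes "linear L"
  shows "L w = (\<Sum>b\<in>Basis. (w \<bullet> b) * L b)"
proof -
  have "L w = L (\<Sum>b\<in>Basis. (w \<bullet> b) *\<^sub>R b)" by (simp add: euclidean_representation)
  also have "\<dots> = (\<Sum>b\<in>Basis. (w \<bullet> b) * L b)"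
    by (simp add: linear_sum[OF assms] linear_scale[OF assms])
  finally show ?thesis .
qed

lemma dHopf_lin: "bounded_linear (\<lambda>x. dHopf x k)"
proof -
  have "linear (\<lambda>x. dHopf x k)"
    by (rule linearI) (auto simp: dHopf_def dmu_def algebra_simps)
  then show ?thesis by (simp add: linear_conv_bounded_linear)
qed

lemma dHopf_lin2: "bounded_linear (\<lambda>k. dHopf x k)"
  using Hopf_deriv has_derivative_bounded_linear by blast

lemma TT_deriv:
  assumes hD: "\<And>vs y. (D vs has_derivative (\<lambda>h. D (h # vs) y)) (at y)"
  assumes "f \<in> TT D"
  shows "\<exists>f'. (\<forall>x. (f has_derivative (\<lambda>k. f' k x)) (at x)) \<and> (\<forall>k. f' k \<in> TT D)"
  using assms(2)
proof induction
  case (tbase p vs)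
  obtain p' where p': "\<And>x. (p has_derivative (\<lambda>k. p' k x)) (at x)" "\<And>k. p' k \<in> poly"
    using poly_deriv[OF tbase] by blast
  have lin: "linear (\<lambda>h. D (h # vs) y)" for y
    using hD has_derivative_linear by blast
  define f' where "f' k x = p' k x * D vs (Hopf x) + (\<Sum>b\<in>Basis. (p x * (dHopf x k \<bullet> b)) * D (b # vs) (Hopf x))" for k x
  show ?case
  proof (intro exI[of _ f'] conjI allI)
    fix x
    have c: "((\<lambda>x. D vs (Hopf x)) has_derivative (\<lambda>k. D (dHopf x k # vs) (Hopf x))) (at x)"
      using has_derivative_compose[OF Hopf_deriv hD] by simp
    have "((\<lambda>x. p x * D vs (Hopf x)) has_derivative (\<lambda>k. p x * D (dHopf x k # vs) (Hopf x) + p' k x * D vs (Hopf x))) (at x)"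
      by (rule has_derivative_mult[OF p'(1) c])
    moreover have "(\<lambda>k. p x * D (dHopf x k # vs) (Hopf x) + p' k x * D vs (Hopf x)) = (\<lambda>k. f' k x)"
    proof
      fix k
      have "D (dHopf x k # vs) (Hopf x) = (\<Sum>b\<in>Basis. (dHopf x k \<bullet> b) * D (b # vs) (Hopf x))"
        using linear_expand[OF lin] .
      then show "p x * D (dHopf x k # vs) (Hopf x) + p' k x * D vs (Hopf x) = f' k x"
        by (simp add: f'_def sum_distrib_left mult.assoc)
    qed
    ultimately show "((\<lambda>x. p x * D vs (Hopf x)) has_derivative (\<lambda>k. f' k x)) (at x)" by simp
  next
    fix k
    have bl: "bounded_linear (\<lambda>x. dHopf x k \<bullet> b)" for b
      using bounded_linear_compose[OF bounded_linear_inner_left dHopf_lin] .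
    have "(\<lambda>x. p' k x * D vs (Hopf x)) \<in> TT D" by (rule TT.tbase[OF p'(2)])
    moreover have "(\<lambda>x. \<Sum>b\<in>Basis. (p x * (dHopf x k \<bullet> b)) * D (b # vs) (Hopf x)) \<in> TT D"
    proof (rule TT_sum)
      fix b :: "complex \<times> real" assume "b \<in> Basis"
      have "(\<lambda>x. p x * (dHopf x k \<bullet> b)) \<in> poly" by (rule pmul[OF tbase.hyps plin[OF bl]])
      then show "(\<lambda>x. (p x * (dHopf x k \<bullet> b)) * D (b # vs) (Hopf x)) \<in> TT D" by (rule TT.tbase)
    qed simp
    ultimately show "f' k \<in> TT D" unfolding f'_def[abs_def] by (rule tadd)
  qed
next
  case (tadd f g)
  then obtain f' g' where a: "\<forall>x. (f has_derivative (\<lambda>k. f' k x)) (at x)" "\<forall>k. f' k \<in> TT D"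
    "\<forall>x. (g has_derivative (\<lambda>k. g' k x)) (at x)" "\<forall>k. g' k \<in> TT D" by blast
  have "((\<lambda>x. f x + g x) has_derivative (\<lambda>k. f' k x + g' k x)) (at x)" for x
    using has_derivative_add[OF a(1)[rule_format] a(3)[rule_format]] .
  moreover have "(\<lambda>x. f' k x + g' k x) \<in> TT D" for k using TT.tadd a(2,4) by blast
  ultimately show ?case by (intro exI[of _ "\<lambda>k x. f' k x + g' k x"]) simp
qed


lemma Re_fst_lin: "bounded_linear (\<lambda>x::complex\<times>complex. Re (fst x))"
  by (rule bounded_linear_compose[OF bounded_linear_Re bounded_linear_fst])
lemma Im_fst_lin: "bounded_linear (\<lambda>x::complex\<times>complex. Im (fst x))"
  by (rule bounded_linear_compose[OF bounded_linear_Im bounded_linear_fst])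
lemma Re_snd_lin: "bounded_linear (\<lambda>x::complex\<times>complex. Re (snd x))"
  by (rule bounded_linear_compose[OF bounded_linear_Re bounded_linear_snd])
lemma Im_snd_lin: "bounded_linear (\<lambda>x::complex\<times>complex. Im (snd x))"
  by (rule bounded_linear_compose[OF bounded_linear_Im bounded_linear_snd])

lemma sq_poly: "bounded_linear l \<Longrightarrow> (\<lambda>x. l x * l x) \<in> poly"
  by (rule pmul[OF plin plin])

lemma mu_poly: "mu \<in> poly"
proof -
  have e: "mu = (\<lambda>x. (\<lambda>x. pi) x * ((\<lambda>x. (\<lambda>x. Re (fst x) * Re (fst x)) x + (\<lambda>x. Im (fst x) * Im (fst x)) x) x)
     + (\<lambda>x. (\<lambda>x. - pi) x * ((\<lambda>x. (\<lambda>x. Re (snd x) * Re (snd x)) x + (\<lambda>x. Im (snd x) * Im (snd x)) x) x)) x)"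
    unfolding mu_def cmod_power2 by (auto simp: fun_eq_iff power2_eq_square algebra_simps)
  show ?thesis unfolding e
    by (intro padd pmul pconst sq_poly Re_fst_lin Im_fst_lin Re_snd_lin Im_snd_lin)
qed

lemma F_smooth:
  fixes D :: "(complex \<times> real) list \<Rightarrow> complex \<times> real \<Rightarrow> real"
  assumes hD: "\<And>vs y. (D vs has_derivative (\<lambda>h. D (h # vs) y)) (at y)"
  shows "smooth (\<lambda>x. (D [] (Hopf x), mu x))"
proof -
  define A where "A = {\<phi>. \<exists>a b. a \<in> TT D \<and> b \<in> poly \<and> \<phi> = (\<lambda>x. (a x, b x))}"
  have key: "\<exists>\<phi>'. (\<forall>x. (\<phi> has_derivative (\<lambda>k. \<phi>' k x)) (at x)) \<and> (\<forall>k. \<phi>' k \<in> A)" if phiA: "\<phi> \<in> A" for \<phi>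
  proof -
    obtain a b where ab: "a \<in> TT D" "b \<in> poly" "\<phi> = (\<lambda>x. (a x, b x))" using phiA A_def by blast
    obtain a' where a': "\<forall>x. (a has_derivative (\<lambda>k. a' k x)) (at x)" "\<forall>k. a' k \<in> TT D"
      using TT_deriv[OF hD ab(1)] by blast
    obtain b' where b': "\<forall>x. (b has_derivative (\<lambda>k. b' k x)) (at x)" "\<forall>k. b' k \<in> poly"
      using poly_deriv[OF ab(2)] by blast
    have "(\<phi> has_derivative (\<lambda>k. (a' k x, b' k x))) (at x)" for x
      unfolding ab(3) by (rule has_derivative_Pair[OF a'(1)[rule_format] b'(1)[rule_format]])
    moreover have "(\<lambda>x. (a' k x, b' k x)) \<in> A" for k using a'(2) b'(2) A_def by blast
    ultimately show ?thesis by (intro exI[of _ "\<lambda>k x. (a' k x, b' k x)"]) simp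
  qed
  show ?thesis
  proof (rule smooth_coinduct[of _ A])
    have "(\<lambda>x. 1 * D [] (Hopf x)) \<in> TT D" by (rule TT.tbase[OF pconst])
    then show "(\<lambda>x. (D [] (Hopf x), mu x)) \<in> A" unfolding A_def using mu_poly by force
  next
    fix \<phi> x assume "\<phi> \<in> A"
    then show "\<phi> differentiable (at x)" using key unfolding differentiable_def by blast
  next
    fix \<phi> k assume "\<phi> \<in> A"
    then obtain \<phi>' where p: "\<forall>x. (\<phi> has_derivative (\<lambda>k. \<phi>' k x)) (at x)" "\<forall>k. \<phi>' k \<in> A"
      using key by blast
    have "frechet_derivative \<phi> (at x) k = \<phi>' k x" for x
      using frechet_derivative_at[OF p(1)[rule_format, of x]] by metis
    then have "(\<lambda>x. frechet_derivative \<phi> (at x) k) = \<phi>' k" by auto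
    then show "(\<lambda>x. frechet_derivative \<phi> (at x) k) \<in> A" using p(2)[rule_format, of k] by (simp only:)
  qed
qed



lemma ker_dim2:
  fixes L :: "complex \<times> complex \<Rightarrow> real \<times> real"
  assumes lin: "linear L" and su: "surj L"
  shows "dim {v. L v = 0} = 2"
proof -
  define K where "K = {v. L v = 0}"
  have subK: "subspace K" unfolding K_def by (rule linear_subspace_kernel[OF lin])
  obtain u1 where u1: "L u1 = (1, 0)" using su by (metis surjD)
  obtain u2 where u2: "L u2 = (0, 1)" using su by (metis surjD)
  have Lsub: "L (x - y) = L x - L y" "L (c *\<^sub>R x) = c *\<^sub>R L x" "L (x + y) = L x + L y" for x y c
    using lin by (auto simp: linear_diff linear_scale linear_add)
  have "UNIV \<subseteq> span (insert u1 (insert u2 K))"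
  proof
    fix v :: "complex \<times> complex"
    define w where "w = v - fst (L v) *\<^sub>R u1 - snd (L v) *\<^sub>R u2"
    have "L w = 0" unfolding w_def using u1 u2 by (simp add: Lsub prod_eq_iff)
    then have "w \<in> K" by (simp add: K_def)
    then have "w + fst (L v) *\<^sub>R u1 + snd (L v) *\<^sub>R u2 \<in> span (insert u1 (insert u2 K))"
      by (intro span_add span_scale span_base) auto
    then show "v \<in> span (insert u1 (insert u2 K))" by (simp add: w_def)
  qed
  then have "dim (UNIV :: (complex \<times> complex) set) \<le> dim (insert u1 (insert u2 K))" by (rule dim_mono)
  also have "\<dots> \<le> dim K + 2" by (simp add: dim_insert)
  finally have ge: "2 \<le> dim K" by simp
  obtain B where B: "B \<subseteq> K" "independent B" "K \<subseteq> span B" "card B = dim K" by (rule basis_exists)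
  have spB: "span B = K" using span_subspace[OF B(1) B(3) subK] .
  have finB: "finite B" using independent_bound_general[OF B(2)] by simp
  have u2n: "u2 \<notin> span B" using u2 by (simp add: spB K_def prod_eq_iff)
  have u1n: "u1 \<notin> span (insert u2 B)"
  proof
    assume "u1 \<in> span (insert u2 B)"
    then obtain k where "u1 - k *\<^sub>R u2 \<in> span B" by (auto simp: span_breakdown_eq)
    then have "L (u1 - k *\<^sub>R u2) = 0" by (simp add: spB K_def)
    then show False using u1 u2 by (simp add: Lsub prod_eq_iff)
  qed
  have ind: "independent (insert u1 (insert u2 B))"
    by (intro independent_insertI u1n u2n B(2))
  have "card (insert u1 (insert u2 B)) = card B + 2"
  proof -
    have a: "u1 \<notin> insert u2 B" using u1n span_base[of u1 "insert u2 B"] by blast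
    have b: "u2 \<notin> B" using u2n span_base[of u2 B] by blast
    show ?thesis using a b finB by (simp add: card_insert_if)
  qed
  moreover have "card (insert u1 (insert u2 B)) \<le> 4"
    using independent_bound[OF ind] by simp
  ultimately show ?thesis using ge B(4) K_def by simp
qed


lemma omega_scale_left: "omega (c *\<^sub>R u) v = c * omega u v"
  by (simp add: omega_def scaleR_conv_of_real algebra_simps)
lemma omega_scale_right: "omega u (c *\<^sub>R v) = c * omega u v"
  by (simp add: omega_def scaleR_conv_of_real algebra_simps)
lemma omega_add_right: "omega u (v + w) = omega u v + omega u w"
  by (simp add: omega_def algebra_simps)
lemma omega_antisym: "omega u v = - omega v u"
proof -
  have "Im (cnj a * b) = - Im (cnj b * a)" for a b :: complex by simp
  then show ?thesis by (simp add: omega_def)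
qed
lemma omega_self: "omega u u = 0"
  using omega_antisym[of u u] by simp

lemma iso2:
  assumes subK: "subspace K" and dK: "dim K = 2" and XK: "X \<in> K" and X0: "X \<noteq> 0"
    and om: "\<And>v. v \<in> K \<Longrightarrow> omega X v = 0"
    and uK: "u \<in> K" and vK: "v \<in> K"
  shows "omega u v = 0"
proof (cases "u \<in> span {X}")
  case True
  then obtain c where "u = c *\<^sub>R X" by (auto simp: span_singleton)
  then show ?thesis using om[OF vK] by (simp add: omega_scale_left)
next
  case False
  have ind: "independent {u, X}"
    using False X0 by (intro independent_insertI) (auto simp: independent_insert independent_empty)
  have "card {u, X} = 2" using False span_base[of u "{X}"] by (auto simp: card_insert_if)
  then have "K \<subseteq> span {u, X}"
    using card_ge_dim_independent[of "{u, X}" K] ind uK XK dK by simp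
  then have "v \<in> span (insert u {X})" using vK by auto
  then obtain a where "v - a *\<^sub>R u \<in> span {X}" by (auto simp: span_breakdown_eq)
  then obtain b where "v - a *\<^sub>R u = b *\<^sub>R X" by (auto simp: span_singleton)
  then have v: "v = a *\<^sub>R u + b *\<^sub>R X" by (simp add: algebra_simps)
  have "omega u X = 0" using om[OF uK] omega_antisym[of u X] by simp
  then show ?thesis by (simp add: v omega_add_right omega_scale_right omega_self)
qed



lemma dHopf0: "dHopf 0 v = 0" by (simp add: dHopf_def dmu_def zero_prod_def)
lemma Hopf0: "Hopf 0 = 0" by (simp add: Hopf_def mu_def zero_prod_def)
lemma dmu_snd: "snd (dHopf x v) = dmu x v" by (simp add: dHopf_def)

lemma Hopf_S: "Hopf (S_act \<theta> z) = Hopf z"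
proof -
  have e: "exp (2 * pi * \<i> * complex_of_real \<theta>) * exp (- 2 * pi * \<i> * complex_of_real \<theta>) = 1"
  proof -
    have "exp (2 * pi * \<i> * complex_of_real \<theta>) * exp (- 2 * pi * \<i> * complex_of_real \<theta>) = exp (2 * pi * \<i> * complex_of_real \<theta> + - 2 * pi * \<i> * complex_of_real \<theta>)"
      by (rule exp_add[symmetric])
    also have "2 * pi * \<i> * complex_of_real \<theta> + - 2 * pi * \<i> * complex_of_real \<theta> = 0" by simp
    finally show ?thesis by simp
  qed
  have n1: "cmod (exp (2 * pi * \<i> * complex_of_real \<theta>)) = 1"
    using norm_exp_i_times[of "2 * pi * \<theta>"] by (simp only: of_real_mult of_real_numeral mult_ac)
  have n2: "cmod (exp (- 2 * pi * \<i> * complex_of_real \<theta>)) = 1"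
    using norm_exp_i_times[of "- 2 * pi * \<theta>"] by (simp only: of_real_mult of_real_numeral of_real_minus mult_ac)
  have "fst (Hopf (S_act \<theta> z)) = fst (Hopf z)"
  proof -
    have "2 * complex_of_real pi * (exp (2 * pi * \<i> * complex_of_real \<theta>) * fst z) * (exp (- 2 * pi * \<i> * complex_of_real \<theta>) * snd z)
      = (exp (2 * pi * \<i> * complex_of_real \<theta>) * exp (- 2 * pi * \<i> * complex_of_real \<theta>)) * (2 * complex_of_real pi * fst z * snd z)"
      by (simp only: ac_simps)
    then show ?thesis unfolding Hopf_def S_act_def fst_conv snd_conv e by simp
  qed
  moreover have "snd (Hopf (S_act \<theta> z)) = snd (Hopf z)"
    unfolding Hopf_def S_act_def mu_def fst_conv snd_conv by (simp add: norm_mult n1 n2)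
  ultimately show ?thesis by (simp add: prod_eq_iff)
qed

lemma dHopf_surj:
  assumes "m \<noteq> 0"
  shows "\<exists>v. dHopf m v = (w, t)"
proof -
  define N where "N = (cmod (fst m))\<^sup>2 + (cmod (snd m))\<^sup>2"
  have "fst m \<noteq> 0 \<or> snd m \<noteq> 0" using assms by (cases m) (auto simp: zero_prod_def)
  then have "N > 0" unfolding N_def
    by (auto intro: add_pos_nonneg add_nonneg_pos)
  define c where "c = w / (2 * complex_of_real pi * complex_of_real N)"
  define s where "s = t / (2 * pi * N)"
  define v where "v = (complex_of_real s * fst m + c * cnj (snd m), - complex_of_real s * snd m + c * cnj (fst m))"
  have Nc: "complex_of_real N = cnj (fst m) * fst m + cnj (snd m) * snd m"
    unfolding N_def of_real_add complex_norm_square by (simp only: mult.commute)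
  have "fst (dHopf m v) = 2 * complex_of_real pi * c * complex_of_real N"
    unfolding dHopf_def v_def Nc by (simp add: algebra_simps)
  also have "\<dots> = w" using \<open>N > 0\<close> by (simp add: c_def)
  finally have 1: "fst (dHopf m v) = w" .
  have "snd (dHopf m v) = 2 * pi * s * N"
  proof -
    have "Re (cnj (fst m) * (complex_of_real s * fst m + c * cnj (snd m))) - Re (cnj (snd m) * (- complex_of_real s * snd m + c * cnj (fst m)))
       = s * Re (cnj (fst m) * fst m + cnj (snd m) * snd m)"
      by (simp add: algebra_simps)
    also have "\<dots> = s * N" by (simp add: Nc[symmetric])
    finally show ?thesis unfolding dHopf_def dmu_def v_def by simp
  qed
  also have "\<dots> = t" using \<open>N > 0\<close> by (simp add: s_def)
  finally have 2: "snd (dHopf m v) = t" .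
  show ?thesis using 1 2 by (intro exI[of _ v]) (simp add: prod_eq_iff)
qed

definition Xg :: "complex \<times> complex \<Rightarrow> complex \<times> complex" where
  "Xg m = (\<i> * fst m, - \<i> * snd m)"

lemma Xg_nz: "m \<noteq> 0 \<Longrightarrow> Xg m \<noteq> 0"
  by (auto simp: Xg_def prod_eq_iff zero_prod_def)

lemma dHopf_Xg: "dHopf m (Xg m) = 0"
  by (simp add: dHopf_def dmu_def Xg_def algebra_simps zero_prod_def)

lemma omega_Xg: "omega (Xg m) v = - dmu m v / (2 * pi)"
  by (simp add: omega_def dmu_def Xg_def)

lemma lin_expand3:
  fixes L :: "complex \<times> real \<Rightarrow> real"
  assumes "linear L"
  shows "L (w, t) = Re w * L (1, 0) + Im w * L (\<i>, 0) + t * L (0, 1)"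
proof -
  have "(w, t) = Re w *\<^sub>R (1, 0) + Im w *\<^sub>R (\<i>, 0) + t *\<^sub>R (0, 1)"
    by (simp add: prod_eq_iff complex_eq_iff)
  then have "L (w, t) = L (Re w *\<^sub>R (1, 0) + Im w *\<^sub>R (\<i>, 0) + t *\<^sub>R (0, 1))" by simp
  also have "\<dots> = Re w * L (1, 0) + Im w * L (\<i>, 0) + t * L (0, 1)"
    by (simp only: linear_add[OF assms] linear_scale[OF assms] real_scaleR_def)
  finally show ?thesis .
qed

lemma lin_surj:
  fixes L :: "complex \<times> real \<Rightarrow> real"
  assumes lin: "linear L"
  shows "surj (\<lambda>h. (L h, snd h)) \<longleftrightarrow> (\<exists>a. L (a, 0) \<noteq> 0)"
proof
  assume "surj (\<lambda>h. (L h, snd h))"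
  then obtain h where "(1, 0) = (L h, snd h)" using surjD[of "\<lambda>h. (L h, snd h)" "(1, 0)"] by blast
  then have h: "L h = 1" "snd h = 0" by auto
  then have "h = (fst h, 0)" by (cases h) simp
  then have "L (fst h, 0) = 1" using h(1) by simp
  then show "\<exists>a. L (a, 0) \<noteq> 0" by (intro exI[of _ "fst h"]) simp
next
  assume "\<exists>a. L (a, 0) \<noteq> 0"
  then obtain a where a: "L (a, 0) \<noteq> 0" by blast
  show "surj (\<lambda>h. (L h, snd h))"
  proof (rule surjI)
    fix y :: "real \<times> real"
    define k where "k = (fst y - L (0, snd y)) / L (a, 0)"
    have e: "(k *\<^sub>R a, snd y) = k *\<^sub>R (a, 0) + (0, snd y)" by simp
    have "L (k *\<^sub>R a, snd y) = k * L (a, 0) + L (0, snd y)"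
      unfolding e by (simp only: linear_add[OF lin] linear_scale[OF lin] real_scaleR_def)
    also have "\<dots> = fst y" using a unfolding k_def by (simp add: field_simps)
    finally have "L (k *\<^sub>R a, snd y) = fst y" .
    then show "(L (k *\<^sub>R a, snd y), snd (k *\<^sub>R a, snd y)) = y" by (cases y) simp
  qed
qed



lemma Hopf_preimage: "\<exists>z. Hopf z = p"
proof -
  obtain w t where p: "p = (w, t)" by (cases p)
  define r where "r = cmod w / (2 * pi)"
  define s where "s = t / pi"
  define R where "R = sqrt (s\<^sup>2 + 4 * r\<^sup>2)"
  have r0: "r \<ge> 0" by (simp add: r_def)
  have "sqrt (s\<^sup>2) \<le> R" unfolding R_def by (rule real_sqrt_le_mono) simp
  then have Rs: "\<bar>s\<bar> \<le> R" by simp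
  have R2: "R\<^sup>2 = s\<^sup>2 + 4 * r\<^sup>2" unfolding R_def by simp
  define a where "a = sqrt ((s + R) / 2)"
  define b where "b = sqrt ((R - s) / 2)"
  have a2: "a\<^sup>2 = (s + R) / 2" unfolding a_def using Rs by simp
  have b2: "b\<^sup>2 = (R - s) / 2" unfolding b_def using Rs by simp
  have "a * b = sqrt ((s + R) / 2 * ((R - s) / 2))" unfolding a_def b_def by (rule real_sqrt_mult[symmetric])
  also have "(s + R) / 2 * ((R - s) / 2) = r\<^sup>2"
    using R2 by (simp add: field_simps power2_eq_square)
  finally have ab: "a * b = r" using r0 by simp
  define u where "u = (if w = 0 then 1 else w / complex_of_real (cmod w))"
  have u1: "cmod u = 1" by (simp add: u_def norm_divide)
  have ru: "2 * complex_of_real pi * complex_of_real r * u = w"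
  proof (cases "w = 0")
    case True then show ?thesis by (simp add: r_def)
  next
    case False then show ?thesis by (simp add: r_def u_def field_simps)
  qed
  define z where "z = (complex_of_real a, complex_of_real b * u)"
  have "fst (Hopf z) = 2 * complex_of_real pi * complex_of_real (a * b) * u"
    by (simp add: Hopf_def z_def mult_ac)
  also have "\<dots> = w" using ru ab by simp
  finally have 1: "fst (Hopf z) = w" .
  have "snd (Hopf z) = pi * (a\<^sup>2 - b\<^sup>2)"
    by (simp add: Hopf_def z_def mu_def norm_mult u1)
  also have "\<dots> = t" unfolding a2 b2 s_def by (simp add: field_simps)
  finally have 2: "snd (Hopf z) = t" .
  show ?thesis using 1 2 p by (intro exI[of _ z]) (simp add: prod_eq_iff)
qed


lemma F_deriv:
  fixes D :: "(complex \<times> real) list \<Rightarrow> complex \<times> real \<Rightarrow> real"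
  assumes hD: "\<And>vs y. (D vs has_derivative (\<lambda>h. D (h # vs) y)) (at y)"
  shows "((\<lambda>x. (D [] (Hopf x), mu x)) has_derivative (\<lambda>v. (D [dHopf x v] (Hopf x), dmu x v))) (at x)"
proof -
  have "((\<lambda>x. D [] (Hopf x)) has_derivative (\<lambda>v. D [dHopf x v] (Hopf x))) (at x)"
    using has_derivative_compose[OF Hopf_deriv hD] by simp
  then show ?thesis by (rule has_derivative_Pair[OF _ mu_deriv])
qed

lemma comp_deriv:
  fixes D :: "(complex \<times> real) list \<Rightarrow> complex \<times> real \<Rightarrow> real"
  assumes hD: "\<And>vs y. (D vs has_derivative (\<lambda>h. D (h # vs) y)) (at y)"
  shows "((\<lambda>x. D vs (Hopf x)) has_derivative (\<lambda>v. D (dHopf x v # vs) (Hopf x))) (at x)"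
  using has_derivative_compose[OF Hopf_deriv hD] by simp

lemma hess1:
  fixes D :: "(complex \<times> real) list \<Rightarrow> complex \<times> real \<Rightarrow> real"
  assumes hD: "\<And>vs y. (D vs has_derivative (\<lambda>h. D (h # vs) y)) (at y)"
  shows "hessian (\<lambda>x. D [] (Hopf x)) 0 u v = D [dHopf v u] 0"
proof -
  have lin: "linear (\<lambda>h. D (h # vs) y)" for vs y
    using hD has_derivative_linear by blast
  have fd: "frechet_derivative (\<lambda>x. D [] (Hopf x)) (at x) = (\<lambda>u. D [dHopf x u] (Hopf x))" for x
    using frechet_derivative_at[OF comp_deriv[OF hD, of "[]" x]] by simp
  have G: "(\<lambda>x. D [dHopf x u] (Hopf x)) = (\<lambda>x. \<Sum>b\<in>Basis. (dHopf x u \<bullet> b) * D [b] (Hopf x))"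
    by (rule ext) (rule linear_expand[OF lin])
  have bl: "bounded_linear (\<lambda>x. dHopf x u \<bullet> b)" for b
    using bounded_linear_compose[OF bounded_linear_inner_left dHopf_lin] .
  have "((\<lambda>x. \<Sum>b\<in>Basis. (dHopf x u \<bullet> b) * D [b] (Hopf x)) has_derivative
     (\<lambda>v. \<Sum>b\<in>Basis. (dHopf 0 u \<bullet> b) * D [dHopf 0 v, b] (Hopf 0) + (dHopf v u \<bullet> b) * D [b] (Hopf 0))) (at 0)"
  proof (rule has_derivative_sum)
    fix b :: "complex \<times> real"
    show "((\<lambda>x. (dHopf x u \<bullet> b) * D [b] (Hopf x)) has_derivative
       (\<lambda>v. (dHopf 0 u \<bullet> b) * D [dHopf 0 v, b] (Hopf 0) + (dHopf v u \<bullet> b) * D [b] (Hopf 0))) (at 0)"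
      using has_derivative_mult[OF bounded_linear.has_derivative[OF bl[of b] has_derivative_ident] comp_deriv[OF hD, of "[b]" 0]]
      by (simp only:)
  qed
  then have E: "(\<lambda>v. \<Sum>b\<in>Basis. (dHopf 0 u \<bullet> b) * D [dHopf 0 v, b] (Hopf 0) + (dHopf v u \<bullet> b) * D [b] (Hopf 0))
     = frechet_derivative (\<lambda>x. \<Sum>b\<in>Basis. (dHopf x u \<bullet> b) * D [b] (Hopf x)) (at 0)"
    by (rule frechet_derivative_at)
  have "frechet_derivative (\<lambda>x. D [dHopf x u] (Hopf x)) (at 0) v
     = (\<Sum>b\<in>Basis. (dHopf 0 u \<bullet> b) * D [dHopf 0 v, b] (Hopf 0) + (dHopf v u \<bullet> b) * D [b] (Hopf 0))"
    unfolding G E[symmetric] by (rule refl)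
  also have "\<dots> = (\<Sum>b\<in>Basis. (dHopf v u \<bullet> b) * D [b] 0)" by (simp add: dHopf0 Hopf0)
  also have "\<dots> = D [dHopf v u] 0" using linear_expand[OF lin, symmetric] .
  finally show ?thesis unfolding hessian_def fd .
qed

lemma hess2: "hessian mu 0 u v = dmu v u"
proof -
  have fd: "frechet_derivative mu (at x) = dmu x" for x
    using frechet_derivative_at[OF mu_deriv] by simp
  have bl: "bounded_linear (\<lambda>x. dmu x u)"
    using bounded_linear_compose[OF bounded_linear_snd dHopf_lin[of u]] by (simp add: dmu_snd)
  show ?thesis unfolding hessian_def fd
    using frechet_derivative_at[OF bounded_linear.has_derivative[OF bl has_derivative_ident]] by simp
qed



lemma NF_span:
  fixes c s :: real
  assumes cs: "c\<^sup>2 + s\<^sup>2 = 1"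
  shows "span {(Complex c s, \<i>), (\<i> * Complex c s / 2, -1/2), (\<i> * Complex c s, 1), (- Complex c s / 2, \<i> / 2)} = UNIV"
proof -
  have "z \<in> span {(Complex c s, \<i>), (\<i> * Complex c s / 2, -1/2), (\<i> * Complex c s, 1), (- Complex c s / 2, \<i> / 2)}" for z
  proof -
    obtain x1 x2 y1 y2 where z: "z = (Complex x1 x2, Complex y1 y2)" by (metis complex.exhaust prod.exhaust)
    have "z = ((x1 * c + x2 * s + y2) / 2) *\<^sub>R (Complex c s, \<i>) + (x2 * c - x1 * s - y1) *\<^sub>R (\<i> * Complex c s / 2, -1/2) + ((x2 * c - x1 * s + y1) / 2) *\<^sub>R (\<i> * Complex c s, 1) + (y2 - (x1 * c + x2 * s)) *\<^sub>R (- Complex c s / 2, \<i> / 2)"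
      unfolding z
      apply (simp add: prod_eq_iff complex_eq_iff scaleR_conv_of_real)
      apply (intro conjI)
      using cs apply algebra
      using cs apply algebra
      apply (simp add: field_simps)
      apply (simp add: field_simps)
      done
    then show ?thesis
      apply (rule ssubst)
      by (intro span_add span_scale span_base) auto
  qed
  then show ?thesis by auto
qed

lemma NF_symp:
  fixes c s :: real
  assumes cs: "c\<^sup>2 + s\<^sup>2 = 1"
  shows "symplectic_basis (Complex c s, \<i>) (\<i> * Complex c s / 2, -1/2) (\<i> * Complex c s, 1) (- Complex c s / 2, \<i> / 2)"
proof -
  have "omega (Complex c s, \<i>) (\<i> * Complex c s / 2, -1/2) = 1 \<and> omega (\<i> * Complex c s, 1) (- Complex c s / 2, \<i> / 2) = 1 \<and>
    omega (Complex c s, \<i>) (- Complex c s / 2, \<i> / 2) = 0 \<and> omega (\<i> * Complex c s, 1) (\<i> * Complex c s / 2, -1/2) = 0 \<and>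
    omega (Complex c s, \<i>) (\<i> * Complex c s, 1) = 0 \<and> omega (\<i> * Complex c s / 2, -1/2) (- Complex c s / 2, \<i> / 2) = 0"
    apply (simp add: omega_def)
    apply (simp add: field_simps)
    using cs by algebra
  then show ?thesis unfolding symplectic_basis_def using NF_span[OF cs] by blast
qed

lemma NF_dmu:
  fixes c s a1 b1 a2 b2 :: real
  assumes cs: "c\<^sup>2 + s\<^sup>2 = 1"
  defines "v \<equiv> a1 *\<^sub>R (Complex c s, \<i>) + b1 *\<^sub>R (\<i> * Complex c s / 2, -1/2) + a2 *\<^sub>R (\<i> * Complex c s, 1) + b2 *\<^sub>R (- Complex c s / 2, \<i> / 2)"
  shows "dmu v v = 0 * (a1*b1+a2*b2) + (-4*pi) * (a1*b2 - a2*b1)"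
  apply (simp add: dmu_def v_def scaleR_conv_of_real)
  apply (simp add: field_simps)
  using cs by algebra

lemma NF_H1:
  fixes c s nn bb a1 b1 a2 b2 :: real
  assumes cs: "c\<^sup>2 + s\<^sup>2 = 1"
  defines "v \<equiv> a1 *\<^sub>R (Complex c s, \<i>) + b1 *\<^sub>R (\<i> * Complex c s / 2, -1/2) + a2 *\<^sub>R (\<i> * Complex c s, 1) + b2 *\<^sub>R (- Complex c s / 2, \<i> / 2)"
  shows "Re (fst (dHopf v v)) * (nn * c) + Im (fst (dHopf v v)) * (nn * s) + dmu v v * bb = (-4*pi*nn) * (a1*b1+a2*b2) + (-4*pi*bb) * (a1*b2 - a2*b1)"
  apply (simp add: dHopf_def dmu_def v_def scaleR_conv_of_real)
  apply (simp add: field_simps)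
  using cs by algebra



theorem lemma7p19:
  fixes g :: "complex \<times> real \<Rightarrow> real"
  assumes "smooth g"
  shows "(nodal_lagrangian_fibration ((\<lambda>p. (g p, snd p)) \<circ> Hopf) \<and>
          S_invariant ((\<lambda>p. (g p, snd p)) \<circ> Hopf) \<and>
          {m. \<not> regular_point ((\<lambda>p. (g p, snd p)) \<circ> Hopf) m} = {0})
         \<longleftrightarrow> submersion (\<lambda>p. (g p, snd p))"
proof -
  obtain D :: "(complex \<times> real) list \<Rightarrow> complex \<times> real \<Rightarrow> real"
    where D0: "D [] = g" and hD: "\<And>vs x. (D vs has_derivative (\<lambda>h. D (h # vs) x)) (at x)"
    using assms unfolding smooth_def by blast
  define F where "F = (\<lambda>p. (g p, snd p)) \<circ> Hopf"
  have Feq: "F = (\<lambda>x. (D [] (Hopf x), mu x))"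
    by (auto simp: F_def D0 Hopf_def fun_eq_iff)
  have fdF: "frechet_derivative F (at x) = (\<lambda>v. (D [dHopf x v] (Hopf x), dmu x v))" for x
    unfolding Feq using frechet_derivative_at[OF F_deriv[OF hD]] by simp
  have linD: "linear (\<lambda>h. D (h # vs) y)" for vs y
    using hD has_derivative_linear by blast
  define Q where "Q p = (\<exists>a. D [(a, 0)] p \<noteq> 0)" for p
  have Dexp: "D [h] p = Re (fst h) * D [(1, 0)] p + Im (fst h) * D [(\<i>, 0)] p + snd h * D [(0, 1)] p" for h p
    using lin_expand3[OF linD[of "[]" p], of "fst h" "snd h"] by simp
  have notQ: "D [h] p = snd h * D [(0, 1)] p" if "\<not> Q p" for h p
  proof -
    have "D [(1, 0)] p = 0" "D [(\<i>, 0)] p = 0" using that unfolding Q_def by auto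
    then show ?thesis using Dexp[of h p] by simp
  qed
  have fder: "((\<lambda>p. (g p, snd p)) has_derivative (\<lambda>h. (D [h] p, snd h))) (at p)" for p
    using has_derivative_Pair[OF hD[of "[]" p] has_derivative_snd[OF has_derivative_ident]] by (simp add: D0)
  have sub_iff: "submersion (\<lambda>p. (g p, snd p)) \<longleftrightarrow> (\<forall>p. Q p)"
  proof -
    have "frechet_derivative (\<lambda>p. (g p, snd p)) (at p) = (\<lambda>h. (D [h] p, snd h))" for p
      using frechet_derivative_at[OF fder[of p]] by simp
    moreover have "(\<lambda>p. (g p, snd p)) differentiable (at p)" for p
      using fder[of p] unfolding differentiable_def by blast
    ultimately show ?thesis unfolding submersion_def Q_def using lin_surj[OF linD] by simp
  qed
  have reg0: "\<not> regular_point F 0"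
  proof
    assume "regular_point F 0"
    then obtain v where "(1, 0) = frechet_derivative F (at 0) v" unfolding regular_point_def surj_def by blast
    then have "(1, 0) = (D [0] 0, 0::real)" unfolding fdF by (simp add: dHopf0 Hopf0 dmu_def)
    moreover have "D [0] 0 = 0" using linear_0[OF linD[of "[]" 0]] by simp
    ultimately show False by simp
  qed
  have regI: "regular_point F m" if m0: "m \<noteq> 0" and qm: "Q (Hopf m)" for m
    unfolding regular_point_def fdF surj_def
  proof
    fix y :: "real \<times> real"
    have "surj (\<lambda>h. (D [h] (Hopf m), snd h))" using lin_surj[OF linD] qm Q_def by simp
    then obtain h where h: "y = (D [h] (Hopf m), snd h)" unfolding surj_def by blast
    obtain v where v: "dHopf m v = h" using dHopf_surj[OF m0, of "fst h" "snd h"] by auto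
    have "dmu m v = snd h" using v dmu_snd[of m v] by simp
    then show "\<exists>v. y = (D [dHopf m v] (Hopf m), dmu m v)" using h v by (intro exI[of _ v]) simp
  qed
  have D00: "D [0] p = 0" for p using linear_0[OF linD[of "[]" p]] by simp
  have regD: "m \<noteq> 0 \<and> Q (Hopf m)" if rm: "regular_point F m" for m
  proof
    show "m \<noteq> 0" using rm reg0 by blast
    show "Q (Hopf m)"
    proof (rule ccontr)
      assume nq: "\<not> Q (Hopf m)"
      from rm obtain v where "(1, 0) = frechet_derivative F (at m) v" unfolding regular_point_def surj_def by blast
      then have e: "1 = D [dHopf m v] (Hopf m)" "0 = dmu m v" unfolding fdF by simp_all
      have "D [dHopf m v] (Hopf m) = dmu m v * D [(0, 1)] (Hopf m)" using notQ[OF nq, of "dHopf m v"] dmu_snd[of m v] by simp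
      then show False using e by simp
    qed
  qed
  have fstF: "fst \<circ> F = (\<lambda>x. D [] (Hopf x))" by (simp add: Feq comp_def)
  have sndF: "snd \<circ> F = mu" by (simp add: Feq comp_def)
  have H1: "hessian (fst \<circ> F) 0 v v = D [dHopf v v] 0" for v unfolding fstF by (rule hess1[OF hD])
  have H2: "hessian (snd \<circ> F) 0 v v = dmu v v" for v unfolding sndF by (rule hess2)
  have H1e: "hessian (fst \<circ> F) 0 v v = Re (fst (dHopf v v)) * D [(1, 0)] 0 + Im (fst (dHopf v v)) * D [(\<i>, 0)] 0 + dmu v v * D [(0, 1)] 0" for v
    unfolding H1 using Dexp[of "dHopf v v" 0] dmu_snd[of v v] by simp
  have dir1: "\<forall>p. Q p" if L: "nodal_lagrangian_fibration F \<and> {m. \<not> regular_point F m} = {0}"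
  proof
    fix p
    show "Q p"
    proof (cases "p = 0")
      case False
      obtain z where z: "Hopf z = p" using Hopf_preimage by blast
      have "z \<noteq> 0" using z False Hopf0 by metis
      then have "z \<notin> {m. \<not> regular_point F m}" using L by simp
      then have "regular_point F z" by simp
      then show ?thesis using regD z by blast
    next
      case True
      have ff: "focus_focus F 0" using L reg0 unfolding nodal_lagrangian_fibration_def by blast
      then have ind: "\<forall>a b. (\<forall>v. a * hessian (fst \<circ> F) 0 v v + b * hessian (snd \<circ> F) 0 v v = 0) \<longrightarrow> a = 0 \<and> b = 0"
        unfolding focus_focus_def Let_def by blast
      show ?thesis
      proof (rule ccontr)
        assume nq: "\<not> Q p"
        have "1 * hessian (fst \<circ> F) 0 v v + (- D [(0, 1)] 0) * hessian (snd \<circ> F) 0 v v = 0" for v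
        proof -
          have "D [dHopf v v] 0 = dmu v v * D [(0, 1)] 0"
            using notQ[of 0 "dHopf v v"] nq True dmu_snd[of v v] by simp
          then show ?thesis unfolding H1 H2 by simp
        qed
        then have "1 = (0::real)" using ind[rule_format, of 1 "- D [(0, 1)] 0"] by blast
        then show False by simp
      qed
    qed
  qed
  have dF0: "frechet_derivative F (at 0) = (\<lambda>_. 0)"
    unfolding fdF by (rule ext) (simp add: dHopf0 Hopf0 D00 dmu_def prod_eq_iff)
  have linF: "linear (frechet_derivative F (at m))" for m
    unfolding fdF using F_deriv[OF hD, of m] has_derivative_linear by blast
  have ff0: "focus_focus F 0" if allQ: "\<forall>p. Q p"
  proof -
    define a1 where "a1 = D [(1, 0)] 0"
    define a2 where "a2 = D [(\<i>, 0)] 0"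
    define bb where "bb = D [(0, 1)] 0"
    have "a1 \<noteq> 0 \<or> a2 \<noteq> 0"
    proof (rule ccontr)
      assume "\<not> (a1 \<noteq> 0 \<or> a2 \<noteq> 0)"
      then have "D [(a, 0)] 0 = 0" for a using Dexp[of "(a, 0)" 0] unfolding a1_def a2_def by simp
      then show False using allQ Q_def by blast
    qed
    then have "a1\<^sup>2 + a2\<^sup>2 > 0" by (auto intro: add_pos_nonneg add_nonneg_pos)
    define nn where "nn = sqrt (a1\<^sup>2 + a2\<^sup>2)"
    have nn: "nn > 0" unfolding nn_def using \<open>a1\<^sup>2 + a2\<^sup>2 > 0\<close> by simp
    have nn2: "nn\<^sup>2 = a1\<^sup>2 + a2\<^sup>2" unfolding nn_def using \<open>a1\<^sup>2 + a2\<^sup>2 > 0\<close> by simp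
    define c where "c = a1 / nn"
    define s where "s = a2 / nn"
    have cs: "c\<^sup>2 + s\<^sup>2 = 1" unfolding c_def s_def power_divide nn2 add_divide_distrib[symmetric]
      using \<open>a1\<^sup>2 + a2\<^sup>2 > 0\<close> by (intro divide_self) linarith
    have nc: "nn * c = a1" "nn * s = a2" unfolding c_def s_def using nn by simp_all
    have He: "hessian (fst \<circ> F) 0 v v = Re (fst (dHopf v v)) * (nn * c) + Im (fst (dHopf v v)) * (nn * s) + dmu v v * bb" for v
      unfolding H1e nc a1_def a2_def bb_def ..
    define vv where "vv x1 y1 x2 y2 = x1 *\<^sub>R (Complex c s, \<i>) + y1 *\<^sub>R (\<i> * Complex c s / 2, -1/2) + x2 *\<^sub>R (\<i> * Complex c s, 1) + y2 *\<^sub>R (- Complex c s / 2, \<i> / 2)" for x1 y1 x2 y2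
    have N1: "hessian (fst \<circ> F) 0 (vv x1 y1 x2 y2) (vv x1 y1 x2 y2) = (-4*pi*nn) * (x1*y1+x2*y2) + (-4*pi*bb) * (x1*y2 - x2*y1)" for x1 y1 x2 y2
      unfolding He vv_def by (rule NF_H1[OF cs])
    have N2: "hessian (snd \<circ> F) 0 (vv x1 y1 x2 y2) (vv x1 y1 x2 y2) = 0 * (x1*y1+x2*y2) + (-4*pi) * (x1*y2 - x2*y1)" for x1 y1 x2 y2
      unfolding H2 vv_def by (rule NF_dmu[OF cs])
    have indep: "\<forall>a b. (\<forall>v. a * hessian (fst \<circ> F) 0 v v + b * hessian (snd \<circ> F) 0 v v = 0) \<longrightarrow> a = 0 \<and> b = 0"
    proof (intro allI impI)
      fix a b assume h: "\<forall>v. a * hessian (fst \<circ> F) 0 v v + b * hessian (snd \<circ> F) 0 v v = 0"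
      have "a * ((-4*pi*nn) * 1) = 0" using h[rule_format, of "vv 1 1 0 0"] unfolding N1 N2 by simp
      then have a0: "a = 0" using nn pi_gt_zero by simp
      have "b * (-4*pi) = 0" using h[rule_format, of "vv 1 0 0 1"] unfolding N1 N2 a0 by simp
      then have "b = 0" using pi_gt_zero by simp
      then show "a = 0 \<and> b = 0" using a0 by simp
    qed
    have ex: "\<exists>e1 f1 e2 f2. symplectic_basis e1 f1 e2 f2 \<and>
          (\<exists>c1 d1 c2 d2. \<forall>a1 b1 a2 b2.
             let v = a1 *\<^sub>R e1 + b1 *\<^sub>R f1 + a2 *\<^sub>R e2 + b2 *\<^sub>R f2 in
               hessian (fst \<circ> F) 0 v v = c1 * (a1 * b1 + a2 * b2) + d1 * (a1 * b2 - a2 * b1) \<and>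
               hessian (snd \<circ> F) 0 v v = c2 * (a1 * b1 + a2 * b2) + d2 * (a1 * b2 - a2 * b1))"
    proof (intro exI conjI allI)
      show "symplectic_basis (Complex c s, \<i>) (\<i> * Complex c s / 2, -1/2) (\<i> * Complex c s, 1) (- Complex c s / 2, \<i> / 2)"
        by (rule NF_symp[OF cs])
      fix x1 y1 x2 y2 :: real
      show "let v = x1 *\<^sub>R (Complex c s, \<i>) + y1 *\<^sub>R (\<i> * Complex c s / 2, -1/2) + x2 *\<^sub>R (\<i> * Complex c s, 1) + y2 *\<^sub>R (- Complex c s / 2, \<i> / 2) in
               hessian (fst \<circ> F) 0 v v = (-4*pi*nn) * (x1 * y1 + x2 * y2) + (-4*pi*bb) * (x1 * y2 - x2 * y1) \<and>
               hessian (snd \<circ> F) 0 v v = 0 * (x1 * y1 + x2 * y2) + (-4*pi) * (x1 * y2 - x2 * y1)"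
        unfolding Let_def using N1[of x1 y1 x2 y2] N2[of x1 y1 x2 y2] unfolding vv_def by (intro conjI)
    qed
    show ?thesis using dF0 indep ex unfolding focus_focus_def Let_def by blast
  qed
  show ?thesis
    unfolding F_def[symmetric] sub_iff
  proof
    assume "nodal_lagrangian_fibration F \<and> S_invariant F \<and> {m. \<not> regular_point F m} = {0}"
    then show "\<forall>p. Q p" using dir1 by blast
  next
    assume allQ: "\<forall>p. Q p"
    have reg_iff: "regular_point F m \<longleftrightarrow> m \<noteq> 0" for m using regD regI allQ by blast
    have crit: "{m. \<not> regular_point F m} = {0}" using reg_iff by auto
    have smo: "smooth F" unfolding Feq by (rule F_smooth[OF hD])
    have lag: "lagrangian_subspace {v. frechet_derivative F (at m) v = 0}" if rm: "regular_point F m" for m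
    proof -
      have m0: "m \<noteq> 0" using rm reg_iff by blast
      have sub: "subspace {v. frechet_derivative F (at m) v = 0}" by (rule linear_subspace_kernel[OF linF])
      have su: "surj (frechet_derivative F (at m))" using rm unfolding regular_point_def .
      have dim: "dim {v. frechet_derivative F (at m) v = 0} = 2" by (rule ker_dim2[OF linF su])
      have dX: "dmu m (Xg m) = 0" using dmu_snd[of m "Xg m"] dHopf_Xg[of m] by simp
      have "frechet_derivative F (at m) (Xg m) = (D [0] (Hopf m), 0)"
        unfolding fdF using dX dHopf_Xg[of m] by simp
      then have XK: "Xg m \<in> {v. frechet_derivative F (at m) v = 0}"
        using D00[of "Hopf m"] by (simp add: prod_eq_iff)
      have om: "omega (Xg m) v = 0" if vK: "v \<in> {v. frechet_derivative F (at m) v = 0}" for v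
      proof -
        have "dmu m v = 0" using vK unfolding fdF by (simp add: prod_eq_iff)
        then show ?thesis by (simp add: omega_Xg)
      qed
      have "\<forall>u\<in>{v. frechet_derivative F (at m) v = 0}. \<forall>v\<in>{v. frechet_derivative F (at m) v = 0}. omega u v = 0"
        using iso2[OF sub dim XK Xg_nz[OF m0] om] by blast
      then show ?thesis unfolding lagrangian_subspace_def using sub dim by blast
    qed
    have foc: "focus_focus F m" if "\<not> regular_point F m" for m
    proof -
      have "m = 0" using that reg_iff by blast
      then show ?thesis using ff0[OF allQ] by simp
    qed
    have nodal: "nodal_lagrangian_fibration F" unfolding nodal_lagrangian_fibration_def
      using smo lag foc by blast
    have Sinv: "S_invariant F" unfolding S_invariant_def F_def by (simp add: Hopf_S)
    show "nodal_lagrangian_fibration F \<and> S_invariant F \<and> {m. \<not> regular_point F m} = {0}"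
      using nodal Sinv crit by blast
  qed
qed

end
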